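(* For every odd integer $k\ge 5$, the graph $F_2(k)$ is word-representable.
   Context: For odd $k\ge5$, $F_2(k)$ is the split graph with clique $C=\{c_1,\dots,c_k\}$ and independent set $I=\{b,a_1,\dots,a_{k-1}\}$, where $N(b)=\{c_2,\dots,c_{k-1}\}$ and $N(a_i)=\{c_i,c_{i+1}\}$ for $1\le i\le k-1$. A graph $G=(V,E)$ is word-representable if there is a word $w$ over $V$ such that for all distinct $a,b\in V$, $ab\in E$ iff $a$ and $b$ alternate in $w$ (i.e. the subsequence of $w$ formed by all occurrences of $a$ and $b$ is $abab\cdots$ or $baba\cdots$). *)

theory Defs
  imports Main
begin

definition alternate :: "'a list \<Rightarrow> 'a \<Rightarrow> 'a \<Rightarrow> bool" where
  "alternate w a b \<longleftrightarrow>
     (let u = filter (\<lambda>x. x = a \<or> x = b) w in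
      \<forall>i. Suc i < length u \<longrightarrow> u ! i \<noteq> u ! Suc i)"

definition word_representable :: "'a set \<Rightarrow> ('a \<Rightarrow> 'a \<Rightarrow> bool) \<Rightarrow> bool" where
  "word_representable V E \<longleftrightarrow>
     (\<exists>w. set w = V \<and>
          (\<forall>a\<in>V. \<forall>b\<in>V. a \<noteq> b \<longrightarrow> (E a b \<longleftrightarrow> alternate w a b)))"

(* Vertices of F_2(k): clique vertices c_i, independent vertices a_i and b. *)
datatype F2v = Cv nat | Av nat | Bv

definition F2_vertices :: "nat \<Rightarrow> F2v set" where
  "F2_vertices k = Cv ` {1..k} \<union> Av ` {1..k-1} \<union> {Bv}"

definition F2_nbr :: "nat \<Rightarrow> F2v \<Rightarrow> F2v set" where
  "F2_nbr k v = (case v of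
       Bv \<Rightarrow> Cv ` {2..k-1}
     | Av i \<Rightarrow> {Cv i, Cv (Suc i)}
     | Cv _ \<Rightarrow> {})"

definition F2_edge :: "nat \<Rightarrow> F2v \<Rightarrow> F2v \<Rightarrow> bool" where
  "F2_edge k u v \<longleftrightarrow>
     u \<noteq> v \<and>
     ((\<exists>i j. u = Cv i \<and> v = Cv j) \<or>
      (v \<in> F2_nbr k u) \<or> (u \<in> F2_nbr k v))"

end

theory Submission
  imports Defs
begin

definition Eb :: "nat \<Rightarrow> F2v list" where
  "Eb j = [Av (2*j), Cv (2*j), Cv (2*j+1), Av (2*j)]"
definition Ob :: "nat \<Rightarrow> F2v list" where
  "Ob j = [Av (2*j+1), Cv (2*j+1), Cv (2*j+2), Av (2*j+1)]"
definition Es :: "nat \<Rightarrow> nat \<Rightarrow> F2v list" where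
  "Es a b = concat (map Eb [a..<b])"
definition Os :: "nat \<Rightarrow> nat \<Rightarrow> F2v list" where
  "Os a b = concat (map Ob [a..<b])"

definition Wd :: "nat \<Rightarrow> F2v list" where
  "Wd m = [Av 1, Cv 1, Bv] @ Es 1 m @ [Av (2*m), Cv (2*m), Bv, Cv (2*m+1), Av (2*m)]
     @ [Av 1, Cv 1, Cv 2, Av 1] @ Os 1 m @ [Cv (2*m+1), Av (2*m)]"

lemma upt_split3: "a \<le> i \<Longrightarrow> i < b \<Longrightarrow> [a..<b] = [a..<i] @ i # [Suc i..<b]"
proof -
  assume "a \<le> i" "i < b"
  then have "[a..<b] = [a..<i] @ [i..<b]" using upt_add_eq_append[of a i "b - i"] by simp
  also have "[i..<b] = i # [Suc i..<b]" using \<open>i < b\<close> by (simp add: upt_conv_Cons)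
  finally show ?thesis .
qed

lemma Es_split: "a \<le> i \<Longrightarrow> i < b \<Longrightarrow> Es a b = Es a i @ Eb i @ Es (Suc i) b"
  unfolding Es_def by (simp add: upt_split3)
lemma Os_split: "a \<le> i \<Longrightarrow> i < b \<Longrightarrow> Os a b = Os a i @ Ob i @ Os (Suc i) b"
  unfolding Os_def by (simp add: upt_split3)

lemma Es_Suc: "Es a (Suc b) = (if a \<le> b then Es a b @ Eb b else [])"
  unfolding Es_def by simp
lemma Os_Suc: "Os a (Suc b) = (if a \<le> b then Os a b @ Ob b else [])"
  unfolding Os_def by simp

lemma Es_0[simp]: "Es a 0 = []" by (simp add: Es_def)
lemma Os_0[simp]: "Os a 0 = []" by (simp add: Os_def)

lemma Cv_Es[simp]: "Cv j \<in> set (Es a b) \<longleftrightarrow> 2*a \<le> j \<and> j < 2*b"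
  apply (induction b) apply (auto simp: Es_Suc Eb_def) done
lemma Av_Es[simp]: "Av j \<in> set (Es a b) \<longleftrightarrow> even j \<and> 2*a \<le> j \<and> j < 2*b"
  apply (induction b) apply (auto simp: Es_Suc Eb_def) done
lemma Bv_Es[simp]: "Bv \<notin> set (Es a b)"
  apply (induction b) apply (auto simp: Es_Suc Eb_def) done
lemma Cv_Os[simp]: "Cv j \<in> set (Os a b) \<longleftrightarrow> 2*a+1 \<le> j \<and> j < 2*b+1"
  apply (induction b) apply (auto simp: Os_Suc Ob_def) done
lemma Av_Os[simp]: "Av j \<in> set (Os a b) \<longleftrightarrow> odd j \<and> 2*a+1 \<le> j \<and> j < 2*b+1"
  apply (induction b) apply (auto simp: Os_Suc Ob_def) apply presburger done
lemma Bv_Os[simp]: "Bv \<notin> set (Os a b)"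
  apply (induction b) apply (auto simp: Os_Suc Ob_def) done

lemma filter_Es_C[simp]: "filter (\<lambda>z. z = Cv j) (Es a b) = (if 2*a \<le> j \<and> j < 2*b then [Cv j] else [])"
  apply (induction b) apply (auto simp: Es_Suc Eb_def) done
lemma filter_Os_C[simp]: "filter (\<lambda>z. z = Cv j) (Os a b) = (if 2*a+1 \<le> j \<and> j < 2*b+1 then [Cv j] else [])"
  apply (induction b) apply (auto simp: Os_Suc Ob_def) done

fun alt_list :: "'a list \<Rightarrow> bool" where
  "alt_list (x # y # r) = (x \<noteq> y \<and> alt_list (y # r))"
| "alt_list _ = True"

lemma alt_list_iff: "alt_list u \<longleftrightarrow> (\<forall>i. Suc i < length u \<longrightarrow> u ! i \<noteq> u ! Suc i)"
proof (induction u rule: alt_list.induct)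
  case (1 x y r)
  show ?case
  proof
    assume "alt_list (x # y # r)"
    then show "\<forall>i. Suc i < length (x # y # r) \<longrightarrow> (x # y # r) ! i \<noteq> (x # y # r) ! Suc i"
      using 1 by (auto simp: nth_Cons split: nat.splits)
  next
    assume H: "\<forall>i. Suc i < length (x # y # r) \<longrightarrow> (x # y # r) ! i \<noteq> (x # y # r) ! Suc i"
    have "x \<noteq> y" using H[rule_format, of 0] by simp
    moreover have "\<forall>i. Suc i < length (y # r) \<longrightarrow> (y # r) ! i \<noteq> (y # r) ! Suc i"
      using H by (metis Suc_less_eq length_Cons nth_Cons_Suc)
    ultimately show "alt_list (x # y # r)" using 1 by simp
  qed
qed auto

lemma alternate_alt_list: "alternate w a b \<longleftrightarrow> alt_list (filter (\<lambda>x. x = a \<or> x = b) w)"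
  unfolding alternate_def Let_def alt_list_iff by simp

lemma alt_sym: "alternate w a b = alternate w b a"
  unfolding alternate_alt_list by (simp add: disj_commute)

lemma alt_list_tl: "alt_list (a # u) \<Longrightarrow> alt_list u"
  by (cases u) auto

lemma alt_list_append_dup: "\<not> alt_list (p @ x # x # r)"
proof (induction p)
  case (Cons a p)
  then show ?case using alt_list_tl by (metis append_Cons)
qed simp

lemma not_alt:
  assumes "w = p @ x # q @ x # r" "x \<notin> set q" "y \<notin> set q"
  shows "\<not> alternate w x y"
proof -
  have "filter (\<lambda>z. z = x \<or> z = y) q = []"
    using assms(2,3) by (auto simp: filter_empty_conv)
  then have "filter (\<lambda>z. z = x \<or> z = y) w =
      filter (\<lambda>z. z = x \<or> z = y) p @ x # x # filter (\<lambda>z. z = x \<or> z = y) r"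
    using assms(1) by simp
  then show ?thesis unfolding alternate_alt_list using alt_list_append_dup by metis
qed

lemma filter_drop1: "x \<notin> set xs \<Longrightarrow> filter (\<lambda>z. z = x \<or> z = y) xs = filter (\<lambda>z. z = y) xs"
  by (induction xs) auto

definition isC :: "F2v \<Rightarrow> bool" where
  "isC z = (case z of Cv _ \<Rightarrow> True | _ \<Rightarrow> False)"

lemma isC_simps[simp]: "isC (Cv j)" "\<not> isC (Av j)" "\<not> isC Bv"
  by (auto simp: isC_def)

lemma filter_isC_Es: "a \<le> b \<Longrightarrow> filter isC (Es a b) = map Cv [2*a..<2*b]"
proof (induction b)
  case (Suc b)
  show ?case
  proof (cases "a \<le> b")
    case True
    have "[2*a..<2*Suc b] = [2*a..<2*b] @ [2*b, 2*b+1]"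
      using True by (simp add: mult_Suc_right[of 2 b])
    then show ?thesis using Suc True by (simp add: Es_Suc Eb_def)
  next
    case False
    then have "a = Suc b" using Suc by simp
    then show ?thesis by (simp add: Es_Suc)
  qed
qed simp

lemma filter_isC_Os: "a \<le> b \<Longrightarrow> filter isC (Os a b) = map Cv [2*a+1..<2*b+1]"
proof (induction b)
  case (Suc b)
  show ?case
  proof (cases "a \<le> b")
    case True
    have "[2*a+1..<2*Suc b+1] = [2*a+1..<2*b+1] @ [2*b+1, 2*b+2]"
      using True by (simp add: mult_Suc_right[of 2 b])
    then show ?thesis using Suc True by (simp add: Os_Suc Ob_def)
  next
    case False
    then have "a = Suc b" using Suc by simp
    then show ?thesis by (simp add: Os_Suc)
  qed
qed simp

lemma upt_12: "2 < n \<Longrightarrow> [1..<n] = 1 # 2 # [3..<n]"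
  by (simp add: upt_conv_Cons eval_nat_numeral)
lemma upt_1: "1 < n \<Longrightarrow> [1..<n] = 1 # [2..<n]"
  by (simp add: upt_conv_Cons eval_nat_numeral)

lemma filter_isC_W:
  assumes "1 \<le> m"
  shows "filter isC (Wd m) = map Cv ([1..<2*m+2] @ [1..<2*m+2])"
proof -
  have e1: "[1..<2*m+2] = 1 # [2..<2*m] @ [2*m, 2*m+1]"
  proof -
    have "[1..<2*m+2] = [1..<2*m] @ [2*m, 2*m+1]" using assms by simp
    moreover have "[1..<2*m] = 1 # [2..<2*m]" using assms upt_1[of "2*m"] by simp
    ultimately show ?thesis by simp
  qed
  have e2: "[1..<2*m+2] = 1 # 2 # [3..<2*m+1] @ [2*m+1]"
  proof -
    have "[1..<2*m+2] = [1..<2*m+1] @ [2*m+1]" using assms by simp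
    moreover have "[1..<2*m+1] = 1 # 2 # [3..<2*m+1]" using assms upt_12[of "2*m+1"] by simp
    ultimately show ?thesis by simp
  qed
  have "filter isC (Wd m) = [Cv 1] @ map Cv [2..<2*m] @ [Cv (2*m), Cv (2*m+1)] @ [Cv 1, Cv 2]
      @ map Cv [3..<2*m+1] @ [Cv (2*m+1)]"
    using assms by (simp add: Wd_def filter_isC_Es filter_isC_Os)
  also have "\<dots> = map Cv ([1..<2*m+2] @ [1..<2*m+2])"
    apply (subst (2) e2) apply (subst e1) by simp
  finally show ?thesis .
qed

lemma filter_upt2: "i < j \<Longrightarrow> filter (\<lambda>l. l = i \<or> l = j) [a..<b] =
   (if a \<le> i \<and> i < b then [i] else []) @ (if a \<le> j \<and> j < b then [j] else [])"
  by (induction b) auto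

lemma CC_alt_lt:
  assumes "1 \<le> m" "1 \<le> i" "i < j" "j \<le> 2*m+1"
  shows "alternate (Wd m) (Cv i) (Cv j)"
proof -
  let ?P = "\<lambda>z. z = Cv i \<or> z = Cv j"
  have "filter ?P (Wd m) = filter ?P (filter isC (Wd m))"
    by (simp add: filter_filter) (metis (mono_tags, lifting) isC_simps(1))
  also have "\<dots> = map Cv (filter (\<lambda>l. l = i \<or> l = j) ([1..<2*m+2] @ [1..<2*m+2]))"
    using assms(1) by (simp add: filter_isC_W filter_map comp_def)
  also have "\<dots> = [Cv i, Cv j, Cv i, Cv j]"
    using assms by (simp add: filter_upt2)
  finally show ?thesis unfolding alternate_alt_list using assms(3) by simp
qed

lemma CC_alt:
  assumes "1 \<le> m" "1 \<le> i" "1 \<le> j" "i \<le> 2*m+1" "j \<le> 2*m+1" "i \<noteq> j"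
  shows "alternate (Wd m) (Cv i) (Cv j)"
proof (cases "i < j")
  case True then show ?thesis using CC_alt_lt assms by simp
next
  case False
  then have "alternate (Wd m) (Cv j) (Cv i)" using CC_alt_lt[of m j i] assms by simp
  then show ?thesis using alt_sym by metis
qed

lemma wit_A1: "Wd m = ([Av 1, Cv 1, Bv] @ Es 1 m @ [Av (2*m), Cv (2*m), Bv, Cv (2*m+1), Av (2*m)])
   @ Av 1 # [Cv 1, Cv 2] @ Av 1 # (Os 1 m @ [Cv (2*m+1), Av (2*m)])"
  by (simp add: Wd_def)

lemma wit_Aeven: "1 \<le> i \<Longrightarrow> i < m \<Longrightarrow> Wd m = ([Av 1, Cv 1, Bv] @ Es 1 i)
   @ Av (2*i) # [Cv (2*i), Cv (2*i+1)] @ Av (2*i) # (Es (Suc i) m @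
     [Av (2*m), Cv (2*m), Bv, Cv (2*m+1), Av (2*m)] @ [Av 1, Cv 1, Cv 2, Av 1] @ Os 1 m @ [Cv (2*m+1), Av (2*m)])"
  unfolding Wd_def Es_split[of 1 i m] by (simp add: Eb_def)

lemma wit_Aodd: "1 \<le> i \<Longrightarrow> i < m \<Longrightarrow> Wd m = ([Av 1, Cv 1, Bv] @ Es 1 m @
     [Av (2*m), Cv (2*m), Bv, Cv (2*m+1), Av (2*m)] @ [Av 1, Cv 1, Cv 2, Av 1] @ Os 1 i)
   @ Av (2*i+1) # [Cv (2*i+1), Cv (2*i+2)] @ Av (2*i+1) # (Os (Suc i) m @ [Cv (2*m+1), Av (2*m)])"
  unfolding Wd_def Os_split[of 1 i m] by (simp add: Ob_def)

lemma wit_A2m_1: "Wd m = ([Av 1, Cv 1, Bv] @ Es 1 m)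
   @ Av (2*m) # [Cv (2*m), Bv, Cv (2*m+1)] @ Av (2*m) # ([Av 1, Cv 1, Cv 2, Av 1] @ Os 1 m @ [Cv (2*m+1), Av (2*m)])"
  by (simp add: Wd_def)

lemma wit_A2m_2: "Wd m = ([Av 1, Cv 1, Bv] @ Es 1 m @ [Av (2*m), Cv (2*m), Bv, Cv (2*m+1)])
   @ Av (2*m) # ([Av 1, Cv 1, Cv 2, Av 1] @ Os 1 m @ [Cv (2*m+1)]) @ Av (2*m) # []"
  by (simp add: Wd_def)

lemma wit_B: "Wd m = [Av 1, Cv 1] @ Bv # (Es 1 m @ [Av (2*m), Cv (2*m)]) @ Bv #
    ([Cv (2*m+1), Av (2*m)] @ [Av 1, Cv 1, Cv 2, Av 1] @ Os 1 m @ [Cv (2*m+1), Av (2*m)])"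
  by (simp add: Wd_def)

lemma IC_A1:
  assumes "2 \<le> m" "1 \<le> j" "j \<le> 2*m+1"
  shows "alternate (Wd m) (Av 1) (Cv j) \<longleftrightarrow> j = 1 \<or> j = 2"
proof (cases "j = 1 \<or> j = 2")
  case True
  then show ?thesis using assms by (auto simp: alternate_alt_list Wd_def filter_drop1)
next
  case False
  then show ?thesis using not_alt[OF wit_A1, where y="Cv j"] by auto
qed

lemma IC_Aeven:
  assumes "2 \<le> m" "1 \<le> i" "i < m" "1 \<le> j" "j \<le> 2*m+1"
  shows "alternate (Wd m) (Av (2*i)) (Cv j) \<longleftrightarrow> j = 2*i \<or> j = 2*i+1"
proof (cases "j = 2*i \<or> j = 2*i+1")
  case True
  have W: "Wd m = [Av 1, Cv 1, Bv] @ Es 1 i @ Eb i @ Es (Suc i) m @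
     [Av (2*m), Cv (2*m), Bv, Cv (2*m+1), Av (2*m)] @ [Av 1, Cv 1, Cv 2, Av 1] @ Os 1 m @ [Cv (2*m+1), Av (2*m)]"
  proof -
    have "Es 1 m = Es 1 i @ Eb i @ Es (Suc i) m" using assms by (intro Es_split) auto
    then show ?thesis unfolding Wd_def by simp
  qed
  show ?thesis using True assms by (auto simp: alternate_alt_list W Eb_def filter_drop1)
next
  case False
  then show ?thesis using not_alt[OF wit_Aeven[OF assms(2,3)], where y="Cv j"] by auto
qed

lemma IC_Aodd:
  assumes "2 \<le> m" "1 \<le> i" "i < m" "1 \<le> j" "j \<le> 2*m+1"
  shows "alternate (Wd m) (Av (2*i+1)) (Cv j) \<longleftrightarrow> j = 2*i+1 \<or> j = 2*i+2"
proof (cases "j = 2*i+1 \<or> j = 2*i+2")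
  case True
  have W: "Wd m = [Av 1, Cv 1, Bv] @ Es 1 m @
     [Av (2*m), Cv (2*m), Bv, Cv (2*m+1), Av (2*m)] @ [Av 1, Cv 1, Cv 2, Av 1] @ Os 1 i @ Ob i @ Os (Suc i) m
     @ [Cv (2*m+1), Av (2*m)]"
  proof -
    have "Os 1 m = Os 1 i @ Ob i @ Os (Suc i) m" using assms by (intro Os_split) auto
    then show ?thesis unfolding Wd_def by simp
  qed
  have par: "2*m \<noteq> Suc (2*i)" by presburger
  show ?thesis using True assms
    apply (auto simp: alternate_alt_list W Ob_def filter_drop1)
    apply presburger
    done
next
  case False
  then show ?thesis using not_alt[OF wit_Aodd[OF assms(2,3)], where y="Cv j"] by auto
qed

lemma IC_A2m:
  assumes "2 \<le> m" "1 \<le> j" "j \<le> 2*m+1"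
  shows "alternate (Wd m) (Av (2*m)) (Cv j) \<longleftrightarrow> j = 2*m \<or> j = 2*m+1"
proof (cases "j = 2*m \<or> j = 2*m+1")
  case True
  then show ?thesis using assms by (auto simp: alternate_alt_list Wd_def filter_drop1)
next
  case False
  then show ?thesis using not_alt[OF wit_A2m_1, where y="Cv j"] by auto
qed

lemma IC_B:
  assumes "2 \<le> m" "1 \<le> j" "j \<le> 2*m+1"
  shows "alternate (Wd m) Bv (Cv j) \<longleftrightarrow> 2 \<le> j \<and> j \<le> 2*m"
proof (cases "2 \<le> j \<and> j \<le> 2*m")
  case True
  then show ?thesis using assms by (auto simp: alternate_alt_list Wd_def filter_drop1)
next
  case False
  then show ?thesis using assms not_alt[OF wit_B, where y="Cv j"] by auto
qed

lemma IC_A: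
  assumes "2 \<le> m" "1 \<le> i" "i \<le> 2*m" "1 \<le> j" "j \<le> 2*m+1"
  shows "alternate (Wd m) (Av i) (Cv j) \<longleftrightarrow> j = i \<or> j = i+1"
proof -
  consider "i = 1" | "i = 2*m" | l where "i = 2*l" "1 \<le> l" "l < m"
    | l where "i = 2*l+1" "1 \<le> l" "l < m"
  proof (cases "even i")
    case True
    then obtain l where "i = 2*l" by blast
    then show ?thesis using that assms by (cases "l = m") auto
  next
    case False
    then obtain l where "i = 2*l+1" using oddE by blast
    then show ?thesis using that assms by (cases "l = 0") auto
  qed
  then show ?thesis
  proof cases
    case 1 then show ?thesis using IC_A1[of m j] assms by auto
  next
    case 2 then show ?thesis using IC_A2m assms by simp
  next
    case 3 then show ?thesis using IC_Aeven[of m l j] assms by simp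
  next
    case 4 then show ?thesis using IC_Aodd[of m l j] assms by simp
  qed
qed

lemma good_wit:
  assumes "2 \<le> m" "1 \<le> i" "i < 2*m"
  shows "\<exists>p q r. Wd m = p @ Av i # q @ Av i # r \<and> (\<forall>z\<in>set q. isC z)"
proof -
  consider "i = 1" | l where "i = 2*l" "1 \<le> l" "l < m"
    | l where "i = 2*l+1" "1 \<le> l" "l < m"
  proof (cases "even i")
    case True
    then obtain l where "i = 2*l" by blast
    then show ?thesis using that assms by auto
  next
    case False
    then obtain l where "i = 2*l+1" using oddE by blast
    then show ?thesis using that assms by (cases "l = 0") auto
  qed
  then show ?thesis
  proof cases
    case 1 then show ?thesis using wit_A1[of m] by fastforce
  next
    case 2 then show ?thesis using wit_Aeven[of l m] by fastforce
  next
    case 3 then show ?thesis using wit_Aodd[of l m] by fastforce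
  qed
qed

lemma II_good:
  assumes "2 \<le> m" "1 \<le> i" "i < 2*m" "\<not> isC y" "y \<noteq> Av i"
  shows "\<not> alternate (Wd m) (Av i) y"
proof -
  obtain p q r where W: "Wd m = p @ Av i # q @ Av i # r" and Q: "\<forall>z\<in>set q. isC z"
    using good_wit[OF assms(1-3)] by blast
  have "Av i \<notin> set q" "y \<notin> set q" using Q assms(4) by auto
  then show ?thesis using not_alt[OF W] by blast
qed

lemma II_A2m_B: "\<not> alternate (Wd m) (Av (2*m)) Bv"
  by (rule not_alt[OF wit_A2m_2]) auto

lemma V_simps:
  "Cv j \<in> F2_vertices k \<longleftrightarrow> 1 \<le> j \<and> j \<le> k"
  "Av j \<in> F2_vertices k \<longleftrightarrow> 1 \<le> j \<and> j \<le> k - 1"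
  "Bv \<in> F2_vertices k"
  by (auto simp: F2_vertices_def)

lemma E_simps:
  "F2_edge k (Cv i) (Cv j) \<longleftrightarrow> i \<noteq> j"
  "F2_edge k (Av i) (Cv j) \<longleftrightarrow> j = i \<or> j = Suc i"
  "F2_edge k (Cv j) (Av i) \<longleftrightarrow> j = i \<or> j = Suc i"
  "F2_edge k Bv (Cv j) \<longleftrightarrow> 2 \<le> j \<and> j \<le> k - 1"
  "F2_edge k (Cv j) Bv \<longleftrightarrow> 2 \<le> j \<and> j \<le> k - 1"
  "\<not> F2_edge k (Av i) (Av j)"
  "\<not> F2_edge k (Av i) Bv"
  "\<not> F2_edge k Bv (Av i)"
  "\<not> F2_edge k Bv Bv"
  by (auto simp: F2_edge_def F2_nbr_def)

lemma set_Wd: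
  assumes "2 \<le> m"
  shows "set (Wd m) = F2_vertices (2*m+1)"
proof (rule set_eqI)
  fix z show "z \<in> set (Wd m) \<longleftrightarrow> z \<in> F2_vertices (2*m+1)"
  proof (cases z)
    case (Cv j) then show ?thesis using assms by (auto simp: Wd_def V_simps)
  next
    case (Av j)
    have "(j = 1 \<or> (even j \<and> 2 \<le> j \<and> j < 2*m) \<or> j = 2*m \<or> (odd j \<and> 3 \<le> j \<and> j < 2*m+1))
       \<longleftrightarrow> 1 \<le> j \<and> j \<le> 2*m" using assms by presburger
    then show ?thesis using Av assms by (auto simp: Wd_def V_simps)
  next
    case Bv then show ?thesis by (simp add: Wd_def V_simps)
  qed
qed

lemma AI_not_alt:
  assumes "2 \<le> m" "1 \<le> i" "i \<le> 2*m" "\<not> isC y" "y \<noteq> Av i"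
    "y = Bv \<or> (\<exists>j. y = Av j \<and> 1 \<le> j \<and> j \<le> 2*m)"
  shows "\<not> alternate (Wd m) (Av i) y"
proof (cases "i < 2*m")
  case True then show ?thesis using II_good assms by blast
next
  case False
  then have i: "i = 2*m" using assms by simp
  show ?thesis
  proof (cases "y = Bv")
    case True then show ?thesis using i II_A2m_B by simp
  next
    case False
    then obtain j where j: "y = Av j" "1 \<le> j" "j \<le> 2*m" using assms(6) by blast
    then have "j < 2*m" using assms(5) i by auto
    then have "\<not> alternate (Wd m) (Av j) (Av i)" using II_good[of m j "Av i"] assms j by auto
    then show ?thesis using j alt_sym by metis
  qed
qed

theorem lemma14:
  fixes k :: nat
  assumes "odd k" and "k \<ge> 5"
  shows "word_representable (F2_vertices k) (F2_edge k)"
proof -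
  obtain m where k: "k = 2*m+1" using assms(1) oddE by blast
  have m2: "2 \<le> m" using assms(2) k by simp
  show ?thesis unfolding word_representable_def
  proof (intro exI conjI ballI impI)
    show "set (Wd m) = F2_vertices k" using set_Wd[OF m2] k by simp
  next
    fix a b assume a: "a \<in> F2_vertices k" and b: "b \<in> F2_vertices k" and ab: "a \<noteq> b"
    show "F2_edge k a b \<longleftrightarrow> alternate (Wd m) a b"
    proof (cases a)
      case (Cv i)
      then have i: "1 \<le> i" "i \<le> 2*m+1" using a k by (auto simp: V_simps)
      show ?thesis
      proof (cases b)
        case (Cv j)
        then show ?thesis using \<open>a = Cv i\<close> b ab i CC_alt[of m i j] m2 k by (auto simp: V_simps E_simps)
      next
        case (Av j)
        then have j: "1 \<le> j" "j \<le> 2*m" using b k by (auto simp: V_simps)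
        have s: "alternate (Wd m) (Cv i) (Av j) = alternate (Wd m) (Av j) (Cv i)" by (rule alt_sym)
        show ?thesis using \<open>a = Cv i\<close> Av i j IC_A[of m j i] m2
          by (auto simp: E_simps s)
      next
        case Bv
        have s: "alternate (Wd m) (Cv i) Bv = alternate (Wd m) Bv (Cv i)" by (rule alt_sym)
        show ?thesis using \<open>a = Cv i\<close> Bv i IC_B[of m i] m2 k
          by (auto simp: E_simps s)
      qed
    next
      case (Av i)
      then have i: "1 \<le> i" "i \<le> 2*m" using a k by (auto simp: V_simps)
      show ?thesis
      proof (cases b)
        case (Cv j)
        then have j: "1 \<le> j" "j \<le> 2*m+1" using b k by (auto simp: V_simps)
        then show ?thesis using \<open>a = Av i\<close> Cv i IC_A[of m i j] m2 by (auto simp: E_simps)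
      next
        case (Av j)
        then have j: "1 \<le> j" "j \<le> 2*m" using b k by (auto simp: V_simps)
        then show ?thesis using \<open>a = Av i\<close> Av ab i AI_not_alt[of m i b] m2 by (auto simp: E_simps)
      next
        case Bv
        then show ?thesis using \<open>a = Av i\<close> i AI_not_alt[of m i b] m2 by (auto simp: E_simps)
      qed
    next
      case Bv
      show ?thesis
      proof (cases b)
        case (Cv j)
        then have j: "1 \<le> j" "j \<le> 2*m+1" using b k by (auto simp: V_simps)
        then show ?thesis using \<open>a = Bv\<close> Cv IC_B[of m j] m2 k by (auto simp: E_simps)
      next
        case (Av j)
        then have j: "1 \<le> j" "j \<le> 2*m" using b k by (auto simp: V_simps)
        have "\<not> alternate (Wd m) (Av j) Bv" using AI_not_alt[of m j Bv] j m2 by auto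
        then show ?thesis using \<open>a = Bv\<close> Av alt_sym by (metis E_simps(8))
      next
        case Bv
        then show ?thesis using \<open>a = Bv\<close> ab by simp
      qed
    qed
  qed
qed

end
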